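(* Let $\hat\theta\in[0,\frac{\pi}{2}]$ and $1<\alpha\le 2$. Then $$\sin(\alpha\hat\theta)\ge\sin(\hat\theta)\cos^{\alpha-1}(\hat\theta),$$ where equality holds if and only if $\hat\theta=0$ in the case $1<\alpha<2$, and if and only if $\hat\theta=0$ or $\hat\theta=\frac{\pi}{2}$ in the case $\alpha=2$. *)

theory Defs
  imports Complex_Main
begin

end

theory Submission
  imports Defs "HOL-Analysis.Analysis"
begin

lemma negcos_convex: "convex_on {0..pi/2} (\<lambda>x. - cos x)"
  by (intro f''_ge0_imp_convex derivative_eq_intros | simp add: cos_ge_zero)+

lemma main_ineq:
  fixes \<theta> b :: real
  assumes "0 < \<theta>" "\<theta> < pi/2" "0 < b" "b \<le> 1"
  shows "sin ((1+b) * \<theta>) > sin \<theta> * cos \<theta> powr b"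
proof -
  have c0: "cos \<theta> > 0" using assms by (intro cos_gt_zero) auto
  have s0: "sin \<theta> > 0" using assms by (intro sin_gt_zero) auto
  have y: "cos \<theta> powr b * 1 powr (1-b) \<le> b * cos \<theta> + (1-b) * 1"
    using Youngs_inequality_0[of b "1-b" "cos \<theta>" 1] assms c0 by simp
  have cv: "- cos ((1 - b) *\<^sub>R 0 + b *\<^sub>R \<theta>) \<le> (1 - b) * (- cos 0) + b * (- cos \<theta>)"
    using convex_onD[OF negcos_convex, of b 0 \<theta>] assms by simp
  hence cb: "cos \<theta> powr b \<le> cos (b*\<theta>)" using y by simp
  have sb: "sin (b*\<theta>) > 0" using assms
    by (intro sin_gt_zero) (auto intro: mult_pos_pos, smt (verit) mult_left_le_one_le pi_gt3)
  have "sin ((1+b)*\<theta>) = sin \<theta> * cos (b*\<theta>) + cos \<theta> * sin (b*\<theta>)"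
    by (simp add: distrib_right sin_add)
  also have "\<dots> > sin \<theta> * cos \<theta> powr b"
    using cb s0 c0 sb by (smt (verit) mult_left_mono mult_pos_pos)
  finally show ?thesis .
qed

theorem lemma2:
  fixes \<theta> \<alpha> :: real
  assumes "0 \<le> \<theta>" and "\<theta> \<le> pi / 2"
    and "1 < \<alpha>" and "\<alpha> \<le> 2"
  shows "sin (\<alpha> * \<theta>) \<ge> sin \<theta> * cos \<theta> powr (\<alpha> - 1)
    \<and> (\<alpha> < 2 \<longrightarrow> (sin (\<alpha> * \<theta>) = sin \<theta> * cos \<theta> powr (\<alpha> - 1) \<longleftrightarrow> \<theta> = 0))
    \<and> (\<alpha> = 2 \<longrightarrow> (sin (\<alpha> * \<theta>) = sin \<theta> * cos \<theta> powr (\<alpha> - 1) \<longleftrightarrow> \<theta> = 0 \<or> \<theta> = pi / 2))"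
proof (cases "\<theta> = 0")
  case True
  then show ?thesis by simp
next
  case nz: False
  show ?thesis
  proof (cases "\<theta> = pi/2")
    case True
    have le: "\<alpha> * \<theta> \<le> 2 * \<theta>" using assms by (intro mult_right_mono) auto
    have "sin (\<alpha> * \<theta>) \<ge> 0" using True assms le
      by (intro sin_ge_zero) auto
    moreover have "\<alpha> < 2 \<Longrightarrow> sin (\<alpha> * \<theta>) > 0"
    proof -
      assume "\<alpha> < 2"
      moreover have "\<theta> > 0" using True pi_gt_zero by linarith
      ultimately have "\<alpha> * \<theta> < 2 * \<theta>" by (intro mult_strict_right_mono)
      hence "\<alpha> * \<theta> < pi" using True by linarith
      moreover have "\<alpha> * \<theta> > 0" using assms \<open>\<theta> > 0\<close> by simp
      ultimately show ?thesis by (intro sin_gt_zero)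
    qed
    moreover have "cos \<theta> = 0" "sin \<theta> = 1" unfolding True by simp_all
    moreover have "\<alpha> = 2 \<Longrightarrow> sin (\<alpha> * \<theta>) = 0" unfolding True by simp
    moreover have "\<theta> = 0 \<or> \<theta> = pi/2" using True by simp
    ultimately show ?thesis using nz by auto
  next
    case False
    have "sin ((1+(\<alpha>-1)) * \<theta>) > sin \<theta> * cos \<theta> powr (\<alpha>-1)"
      using main_ineq[of \<theta> "\<alpha>-1"] assms nz False by auto
    thus ?thesis using nz False by auto
  qed
qed

end
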